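(* Let $A\in\mathbb{C}^{m\times n}$ and $B\in\mathbb{C}^{n\times p}$. Then each of the following sets of matrices is contained in $\{(AB)^{(1)}\}$: $$\{(A^{(1)}AB)^{(1)}A^{(1)}\},\quad \{B^{(1)}(ABB^{(1)})^{(1)}\},\quad \{(A^{*}AB)^{(1)}A^{*}\},\quad \{B^{*}(ABB^{*})^{(1)}\},\quad \{(AA^{*}AB)^{(1)}AA^{*}\},$$ $$\{B^{*}B(ABB^{*}B)^{(1)}\},\quad \{B^{(1)}(A^{(1)}ABB^{(1)})^{(1)}A^{(1)}\},\quad \{B^{*}(A^{*}ABB^{*})^{(1)}A^{*}\},\quad \{B^{*}B(AA^{*}ABB^{*}B)^{(1)}AA^{*}\}.$$
   Context: For a complex matrix $X$, $X^*$ is its conjugate transpose, $r(X)$ its rank and $\mathscr{R}(X)$ its column space. For $X\in\mathbb{C}^{p\times q}$, a matrix $G\in\mathbb{C}^{q\times p}$ is called an $\{i,\ldots,j\}$-generalized inverse of $X$ (written $X^{(i,\ldots,j)}$) if it satisfies the equations numbered $i,\ldots,j$ among the four Penrose equations (i) $XGX=X$, (ii) $GXG=G$, (iii) $(XG)^*=XG$, (iv) $(GX)^*=GX$; $\{X^{(i,\ldots,j)}\}$ denotes the set of all such $G$. The Moore–Penrose inverse $X^\dagger$ is the unique matrix satisfying all four equations. For a matrix expression involving generalized inverses, $\{\cdot\}$ denotes the set of all values of the expression as each generalized inverse occurring in it ranges over all admissible choices; repeated occurrences of the same symbol (e.g. $A^{(1)}$ appearing twice) denote one and the same choice, and a generalized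 inverse of a matrix that itself contains a chosen generalized inverse is taken with respect to that chosen matrix. *)

theory Defs
  imports Complex_Main "Jordan_Normal_Form.Matrix"
begin

definition ctrans :: "complex mat \<Rightarrow> complex mat" where
  "ctrans X = mat (dim_col X) (dim_row X) (\<lambda>(i,j). cnj (X $$ (j,i)))"

definition inv1 :: "complex mat \<Rightarrow> complex mat set" where
  "inv1 X = {G. G \<in> carrier_mat (dim_col X) (dim_row X) \<and> X * G * X = X}"

end

theory Submission
  imports Defs
begin


lemma assoc_dim:
  fixes A B C :: "'a::comm_ring_1 mat"
  assumes "dim_col A = dim_row B" "dim_col B = dim_row C"
  shows "A * B * C = A * (B * C)"
  using assms by (intro assoc_mult_mat[of A "dim_row A" "dim_col A" B "dim_col B" C "dim_col C"]) auto

lemma ctrans_dim[simp]: "dim_row (ctrans X) = dim_col X" "dim_col (ctrans X) = dim_row X"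
  by (auto simp: ctrans_def)

lemma ctrans_idx[simp]: "i < dim_col X \<Longrightarrow> j < dim_row X \<Longrightarrow> ctrans X $$ (i,j) = cnj (X $$ (j,i))"
  by (auto simp: ctrans_def)

lemma ctrans_ctrans[simp]: "ctrans (ctrans X) = X"
  by (intro eq_matI) auto

lemma ctrans_mult: "dim_col A = dim_row B \<Longrightarrow> ctrans (A * B) = ctrans B * ctrans A"
  by (intro eq_matI) (auto simp: scalar_prod_def row_def col_def ac_simps)

lemma cancel_left:
  fixes A X Y :: "complex mat"
  assumes d: "dim_col A = dim_row X" "dim_row X = dim_row Y" "dim_col X = dim_col Y"
   and h: "ctrans A * (A * X) = ctrans A * (A * Y)"
  shows "A * X = A * Y"
proof -
  define D where "D = A * X - A * Y"
  have Dc: "D \<in> carrier_mat (dim_row A) (dim_col X)" unfolding D_def carrier_mat_def using d by simp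
  have XY: "X - Y \<in> carrier_mat (dim_row X) (dim_col X)" unfolding carrier_mat_def using d by simp
  have DD: "D = A * (X - Y)" unfolding D_def
    by (rule mult_minus_distrib_mat[symmetric, of A "dim_row A" "dim_col A"]) (use d in \<open>auto intro: carrier_matI\<close>)
  have "ctrans A * D = ctrans A * (A * X) - ctrans A * (A * Y)" unfolding D_def
    by (rule mult_minus_distrib_mat[of _ "dim_col A" "dim_row A"]) (use d in \<open>auto intro: carrier_matI\<close>)
  hence z: "ctrans A * D = 0\<^sub>m (dim_col A) (dim_col X)" using h d
    by (metis minus_r_inv_mat carrier_matI ctrans_dim(1) index_mult_mat(2,3))
  have "ctrans D * D = ctrans (X - Y) * ctrans A * D" unfolding DD
    by (subst ctrans_mult) (use d in auto)
  also have "\<dots> = ctrans (X - Y) * (ctrans A * D)" using d Dc by (simp add: assoc_dim)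
  also have "\<dots> = 0\<^sub>m (dim_col X) (dim_col X)" using z d by simp
  finally have zz: "ctrans D * D = 0\<^sub>m (dim_col X) (dim_col X)" .
  show ?thesis
  proof -
    have "D = 0\<^sub>m (dim_row A) (dim_col X)"
    proof (intro eq_matI)
      fix i j assume i: "i < dim_row (0\<^sub>m (dim_row A) (dim_col X))" and j: "j < dim_col (0\<^sub>m (dim_row A) (dim_col X))"
      have "(ctrans D * D) $$ (j,j) = (\<Sum>k<dim_row A. cnj (D $$ (k,j)) * D $$ (k,j))"
        using Dc j by (auto simp: scalar_prod_def row_def col_def atLeast0LessThan)
      hence "(\<Sum>k<dim_row A. cnj (D $$ (k,j)) * D $$ (k,j)) = 0" using zz j by simp
      hence s: "(\<Sum>k<dim_row A. complex_of_real ((cmod (D $$ (k,j)))\<^sup>2)) = 0"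
        by (metis (no_types, lifting) complex_norm_square mult.commute sum.cong)
      hence "(\<Sum>k<dim_row A. (cmod (D $$ (k,j)))\<^sup>2) = 0"
        by (metis of_real_eq_0_iff of_real_sum)
      hence "\<forall>k\<in>{..<dim_row A}. (cmod (D $$ (k,j)))\<^sup>2 = 0"
        by (subst (asm) sum_nonneg_eq_0_iff) auto
      thus "D $$ (i,j) = 0\<^sub>m (dim_row A) (dim_col X) $$ (i,j)" using i j by simp
    qed (use Dc in auto)
    hence e: "\<And>i j. i < dim_row A \<Longrightarrow> j < dim_col X \<Longrightarrow> (A * X - A * Y) $$ (i,j) = 0"
      unfolding D_def by (metis index_zero_mat(1))
    show ?thesis
    proof (intro eq_matI)
      fix i j assume "i < dim_row (A * Y)" "j < dim_col (A * Y)"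
      thus "(A * X) $$ (i, j) = (A * Y) $$ (i, j)" using e[of i j] d by simp
    qed (use d in auto)
  qed
qed

lemma cancel_right:
  fixes B X Y :: "complex mat"
  assumes d: "dim_col X = dim_row B" "dim_row X = dim_row Y" "dim_col X = dim_col Y"
   and h: "X * (B * ctrans B) = Y * (B * ctrans B)"
  shows "X * B = Y * B"
proof -
  have e: "ctrans (B * ctrans B) = B * ctrans B"
    by (subst ctrans_mult) simp_all
  have cx: "\<And>Z. dim_col Z = dim_row B \<Longrightarrow> ctrans (Z * (B * ctrans B)) = ctrans (ctrans B) * (ctrans B * ctrans Z)"
  proof -
    fix Z :: "complex mat" assume z: "dim_col Z = dim_row B"
    have "ctrans (Z * (B * ctrans B)) = ctrans (B * ctrans B) * ctrans Z"
      by (rule ctrans_mult) (simp add: z)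
    also have "\<dots> = B * ctrans B * ctrans Z" by (simp only: e)
    also have "\<dots> = B * (ctrans B * ctrans Z)" by (rule assoc_dim) (simp_all add: z)
    finally show "ctrans (Z * (B * ctrans B)) = ctrans (ctrans B) * (ctrans B * ctrans Z)" by simp
  qed
  have "ctrans (ctrans B) * (ctrans B * ctrans X) = ctrans (ctrans B) * (ctrans B * ctrans Y)"
    using cx[of X] cx[of Y] h d by simp
  hence "ctrans B * ctrans X = ctrans B * ctrans Y"
    by (rule cancel_left[rotated 3]) (use d in simp_all)
  hence "ctrans (ctrans B * ctrans X) = ctrans (ctrans B * ctrans Y)" by simp
  moreover have "ctrans (ctrans B * ctrans X) = X * B" by (subst ctrans_mult) (simp_all add: d)
  moreover have "ctrans (ctrans B * ctrans Y) = Y * B" by (subst ctrans_mult) (use d in simp_all)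
  ultimately show ?thesis by simp
qed

context
  fixes A B G :: "complex mat" and m n p :: nat
  assumes A: "A \<in> carrier_mat m n" and B: "B \<in> carrier_mat n p"
begin

lemma c1:
  assumes A1: "A1 \<in> carrier_mat n m"
   and G: "G \<in> carrier_mat p n" and h1: "A * A1 * A = A" and h: "A1 * A * B * G * (A1 * A * B) = A1 * A * B"
  shows "A * B * (G * A1) * (A * B) = A * B"
proof -
  note d = carrier_matD[OF A] carrier_matD[OF B] carrier_matD[OF A1] carrier_matD[OF G]
  have h1': "\<And>X. dim_row X = n \<Longrightarrow> A * (A1 * (A * X)) = A * X"
  proof -
    fix X :: "complex mat" assume "dim_row X = n"
    hence "A * (A1 * (A * X)) = (A * A1 * A) * X" by (simp add: assoc_dim d)
    thus "A * (A1 * (A * X)) = A * X" using h1 by simp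
  qed
  have "A * (A1 * A * B * G * (A1 * A * B)) = A * (A1 * A * B)" using h by simp
  thus ?thesis by (simp add: assoc_dim d h1')
qed

lemma c2:
  assumes B1: "B1 \<in> carrier_mat p n"
   and G: "G \<in> carrier_mat n m" and h1: "B * B1 * B = B" and h: "A * B * B1 * G * (A * B * B1) = A * B * B1"
  shows "A * B * (B1 * G) * (A * B) = A * B"
proof -
  note d = carrier_matD[OF A] carrier_matD[OF B] carrier_matD[OF B1] carrier_matD[OF G]
  have h1': "\<And>X. dim_col X = n \<Longrightarrow> X * (B * (B1 * B)) = X * B"
  proof -
    fix X :: "complex mat" assume "dim_col X = n"
    hence "X * (B * (B1 * B)) = X * (B * B1 * B)" by (simp add: assoc_dim d)
    thus "X * (B * (B1 * B)) = X * B" using h1 by simp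
  qed
  have "(A * B * B1 * G * (A * B * B1)) * B = (A * B * B1) * B" using h by simp
  thus ?thesis by (simp add: assoc_dim d h1')
qed

lemma c7:
  assumes A1: "A1 \<in> carrier_mat n m" and B1: "B1 \<in> carrier_mat p n"
   and G: "G \<in> carrier_mat n n" and h1: "A * A1 * A = A" and h2: "B * B1 * B = B"
   and h: "A1 * A * B * B1 * G * (A1 * A * B * B1) = A1 * A * B * B1"
  shows "A * B * (B1 * G * A1) * (A * B) = A * B"
proof -
  note d = carrier_matD[OF A] carrier_matD[OF B] carrier_matD[OF A1] carrier_matD[OF B1] carrier_matD[OF G]
  have h1': "\<And>X. dim_row X = n \<Longrightarrow> A * (A1 * (A * X)) = A * X"
  proof -
    fix X :: "complex mat" assume "dim_row X = n"
    hence "A * (A1 * (A * X)) = (A * A1 * A) * X" by (simp add: assoc_dim d)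
    thus "A * (A1 * (A * X)) = A * X" using h1 by simp
  qed
  have h2': "\<And>X. dim_col X = n \<Longrightarrow> X * (B * (B1 * B)) = X * B"
  proof -
    fix X :: "complex mat" assume "dim_col X = n"
    hence "X * (B * (B1 * B)) = X * (B * B1 * B)" by (simp add: assoc_dim d)
    thus "X * (B * (B1 * B)) = X * B" using h2 by simp
  qed
  have h2'': "B * (B1 * B) = B"
    using h2 by (simp add: assoc_dim d)
  have "A * (A1 * A * B * B1 * G * (A1 * A * B * B1)) * B = A * (A1 * A * B * B1) * B" using h by simp
  thus ?thesis by (simp add: assoc_dim d h1' h2' h2'')
qed

lemma c3:
  assumes G: "G \<in> carrier_mat p n"
   and h: "ctrans A * A * B * G * (ctrans A * A * B) = ctrans A * A * B"
  shows "A * B * (G * ctrans A) * (A * B) = A * B"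
proof -
  note d = carrier_matD[OF A] carrier_matD[OF B] carrier_matD[OF G]
  have "A * (B * (G * (ctrans A * (A * B)))) = A * B"
    by (rule cancel_left) (use h d in \<open>simp_all add: assoc_dim\<close>)
  thus ?thesis by (simp add: assoc_dim d)
qed

lemma c4:
  assumes G: "G \<in> carrier_mat n m"
   and h: "A * B * ctrans B * G * (A * B * ctrans B) = A * B * ctrans B"
  shows "A * B * (ctrans B * G) * (A * B) = A * B"
proof -
  note d = carrier_matD[OF A] carrier_matD[OF B] carrier_matD[OF G]
  have "(A * (B * (ctrans B * (G * A)))) * B = A * B"
    by (rule cancel_right) (use h d in \<open>simp_all add: assoc_dim\<close>)
  thus ?thesis by (simp add: assoc_dim d)
qed


lemma c5:
  assumes G: "G \<in> carrier_mat p m"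
   and h: "A * ctrans A * A * B * G * (A * ctrans A * A * B) = A * ctrans A * A * B"
  shows "A * B * (G * A * ctrans A) * (A * B) = A * B"
proof -
  note d = carrier_matD[OF A] carrier_matD[OF B] carrier_matD[OF G]
  have s1: "ctrans A * (A * B * G * A * ctrans A * A * B) = ctrans A * (A * B)"
    by (rule cancel_left[of "ctrans A"]) (use h d in \<open>simp_all add: assoc_dim\<close>)
  have "A * (B * G * A * ctrans A * A * B) = A * B"
    by (rule cancel_left[of A]) (use s1 d in \<open>simp_all add: assoc_dim\<close>)
  thus ?thesis by (simp add: assoc_dim d)
qed

lemma c6:
  assumes G: "G \<in> carrier_mat p m"
   and h: "A * B * ctrans B * B * G * (A * B * ctrans B * B) = A * B * ctrans B * B"
  shows "A * B * (ctrans B * B * G) * (A * B) = A * B"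
proof -
  note d = carrier_matD[OF A] carrier_matD[OF B] carrier_matD[OF G]
  have s1: "(A * B * ctrans B * B * G * A * B) * ctrans B = (A * B) * ctrans B"
    by (rule cancel_right[of _ "ctrans B"]) (use h d in \<open>simp_all add: assoc_dim\<close>)
  have "(A * B * ctrans B * B * G * A) * B = A * B"
    by (rule cancel_right[of _ B]) (use s1 d in \<open>simp_all add: assoc_dim\<close>)
  thus ?thesis by (simp add: assoc_dim d)
qed

lemma c8:
  assumes G: "G \<in> carrier_mat n n"
   and h: "ctrans A * A * B * ctrans B * G * (ctrans A * A * B * ctrans B) = ctrans A * A * B * ctrans B"
  shows "A * B * (ctrans B * G * ctrans A) * (A * B) = A * B"
proof -
  note d = carrier_matD[OF A] carrier_matD[OF B] carrier_matD[OF G]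
  have s1: "A * (B * ctrans B * G * ctrans A * A * B * ctrans B) = A * (B * ctrans B)"
    by (rule cancel_left[of A]) (use h d in \<open>simp_all add: assoc_dim\<close>)
  have "(A * B * ctrans B * G * ctrans A * A) * B = A * B"
    by (rule cancel_right[of _ B]) (use s1 d in \<open>simp_all add: assoc_dim\<close>)
  thus ?thesis by (simp add: assoc_dim d)
qed

lemma c9:
  assumes G: "G \<in> carrier_mat p m"
   and h: "A * ctrans A * A * B * ctrans B * B * G * (A * ctrans A * A * B * ctrans B * B)
     = A * ctrans A * A * B * ctrans B * B"
  shows "A * B * (ctrans B * B * G * A * ctrans A) * (A * B) = A * B"
proof -
  note d = carrier_matD[OF A] carrier_matD[OF B] carrier_matD[OF G]
  have s1: "ctrans A * (A * B * ctrans B * B * G * A * ctrans A * A * B * ctrans B * B) = ctrans A * (A * B * ctrans B * B)"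
    by (rule cancel_left[of "ctrans A"]) (use h d in \<open>simp_all add: assoc_dim\<close>)
  have s2: "A * (B * ctrans B * B * G * A * ctrans A * A * B * ctrans B * B) = A * (B * ctrans B * B)"
    by (rule cancel_left[of A]) (use s1 d in \<open>simp_all add: assoc_dim\<close>)
  have s3: "(A * B * ctrans B * B * G * A * ctrans A * A * B) * ctrans B = (A * B) * ctrans B"
    by (rule cancel_right[of _ "ctrans B"]) (use s2 d in \<open>simp_all add: assoc_dim\<close>)
  have "(A * B * ctrans B * B * G * A * ctrans A * A) * B = A * B"
    by (rule cancel_right[of _ B]) (use s3 d in \<open>simp_all add: assoc_dim\<close>)
  thus ?thesis by (simp add: assoc_dim d)
qed

end


theorem theorem3p1:
  fixes A B :: "complex mat" and m n p :: nat
  assumes "A \<in> carrier_mat m n" and "B \<in> carrier_mat n p"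
  shows "({G * A1 | G A1. A1 \<in> inv1 A \<and> G \<in> inv1 (A1 * A * B)} \<subseteq> inv1 (A * B))
   \<and> ({B1 * G | G B1. B1 \<in> inv1 B \<and> G \<in> inv1 (A * B * B1)} \<subseteq> inv1 (A * B))
   \<and> ({G * ctrans A | G. G \<in> inv1 (ctrans A * A * B)} \<subseteq> inv1 (A * B))
   \<and> ({ctrans B * G | G. G \<in> inv1 (A * B * ctrans B)} \<subseteq> inv1 (A * B))
   \<and> ({G * A * ctrans A | G. G \<in> inv1 (A * ctrans A * A * B)} \<subseteq> inv1 (A * B))
   \<and> ({ctrans B * B * G | G. G \<in> inv1 (A * B * ctrans B * B)} \<subseteq> inv1 (A * B))
   \<and> ({B1 * G * A1 | G A1 B1. A1 \<in> inv1 A \<and> B1 \<in> inv1 B \<and> G \<in> inv1 (A1 * A * B * B1)}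
      \<subseteq> inv1 (A * B))
   \<and> ({ctrans B * G * ctrans A | G. G \<in> inv1 (ctrans A * A * B * ctrans B)} \<subseteq> inv1 (A * B))
   \<and> ({ctrans B * B * G * A * ctrans A | G. G \<in> inv1 (A * ctrans A * A * B * ctrans B * B)}
      \<subseteq> inv1 (A * B))"
proof -
  note A = assms(1) and B = assms(2)
  have s1: "{G * A1 | G A1. A1 \<in> inv1 A \<and> G \<in> inv1 (A1 * A * B)} \<subseteq> inv1 (A * B)"
  proof
    fix X assume "X \<in> {G * A1 | G A1. A1 \<in> inv1 A \<and> G \<in> inv1 (A1 * A * B)}"
    then obtain G A1 where X: "X = G * A1" and A1i: "A1 \<in> inv1 A" and Gi: "G \<in> inv1 (A1 * A * B)" by blast
    have A1c: "A1 \<in> carrier_mat n m" and A1h: "A * A1 * (A) = A"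
      using A1i A B by (auto simp: inv1_def)
    have Gc: "G \<in> carrier_mat p n" and Gh: "A1 * A * B * G * (A1 * A * B) = A1 * A * B"
      using Gi A B A1c by (auto simp: inv1_def)

    show "X \<in> inv1 (A * B)" unfolding inv1_def X using c1[OF A B A1c Gc A1h Gh] A1c Gc A B by auto
  qed
  have s2: "{B1 * G | G B1. B1 \<in> inv1 B \<and> G \<in> inv1 (A * B * B1)} \<subseteq> inv1 (A * B)"
  proof
    fix X assume "X \<in> {B1 * G | G B1. B1 \<in> inv1 B \<and> G \<in> inv1 (A * B * B1)}"
    then obtain G B1 where X: "X = B1 * G" and B1i: "B1 \<in> inv1 B" and Gi: "G \<in> inv1 (A * B * B1)" by blast
    have B1c: "B1 \<in> carrier_mat p n" and B1h: "B * B1 * (B) = B"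
      using B1i A B by (auto simp: inv1_def)
    have Gc: "G \<in> carrier_mat n m" and Gh: "A * B * B1 * G * (A * B * B1) = A * B * B1"
      using Gi A B B1c by (auto simp: inv1_def)

    show "X \<in> inv1 (A * B)" unfolding inv1_def X using c2[OF A B B1c Gc B1h Gh] B1c Gc A B by auto
  qed
  have s3: "{G * ctrans A | G. G \<in> inv1 (ctrans A * A * B)} \<subseteq> inv1 (A * B)"
  proof
    fix X assume "X \<in> {G * ctrans A | G. G \<in> inv1 (ctrans A * A * B)}"
    then obtain G where X: "X = G * ctrans A" and Gi: "G \<in> inv1 (ctrans A * A * B)" by blast
    have Gc: "G \<in> carrier_mat p n" and Gh: "ctrans A * A * B * G * (ctrans A * A * B) = ctrans A * A * B"
      using Gi A B by (auto simp: inv1_def)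

    show "X \<in> inv1 (A * B)" unfolding inv1_def X using c3[OF A B Gc Gh] Gc A B by auto
  qed
  have s4: "{ctrans B * G | G. G \<in> inv1 (A * B * ctrans B)} \<subseteq> inv1 (A * B)"
  proof
    fix X assume "X \<in> {ctrans B * G | G. G \<in> inv1 (A * B * ctrans B)}"
    then obtain G where X: "X = ctrans B * G" and Gi: "G \<in> inv1 (A * B * ctrans B)" by blast
    have Gc: "G \<in> carrier_mat n m" and Gh: "A * B * ctrans B * G * (A * B * ctrans B) = A * B * ctrans B"
      using Gi A B by (auto simp: inv1_def)

    show "X \<in> inv1 (A * B)" unfolding inv1_def X using c4[OF A B Gc Gh] Gc A B by auto
  qed
  have s5: "{G * A * ctrans A | G. G \<in> inv1 (A * ctrans A * A * B)} \<subseteq> inv1 (A * B)"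
  proof
    fix X assume "X \<in> {G * A * ctrans A | G. G \<in> inv1 (A * ctrans A * A * B)}"
    then obtain G where X: "X = G * A * ctrans A" and Gi: "G \<in> inv1 (A * ctrans A * A * B)" by blast
    have Gc: "G \<in> carrier_mat p m" and Gh: "A * ctrans A * A * B * G * (A * ctrans A * A * B) = A * ctrans A * A * B"
      using Gi A B by (auto simp: inv1_def)

    show "X \<in> inv1 (A * B)" unfolding inv1_def X using c5[OF A B Gc Gh] Gc A B by auto
  qed
  have s6: "{ctrans B * B * G | G. G \<in> inv1 (A * B * ctrans B * B)} \<subseteq> inv1 (A * B)"
  proof
    fix X assume "X \<in> {ctrans B * B * G | G. G \<in> inv1 (A * B * ctrans B * B)}"
    then obtain G where X: "X = ctrans B * B * G" and Gi: "G \<in> inv1 (A * B * ctrans B * B)" by blast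
    have Gc: "G \<in> carrier_mat p m" and Gh: "A * B * ctrans B * B * G * (A * B * ctrans B * B) = A * B * ctrans B * B"
      using Gi A B by (auto simp: inv1_def)

    show "X \<in> inv1 (A * B)" unfolding inv1_def X using c6[OF A B Gc Gh] Gc A B by auto
  qed
  have s7: "{B1 * G * A1 | G A1 B1. A1 \<in> inv1 A \<and> B1 \<in> inv1 B \<and> G \<in> inv1 (A1 * A * B * B1)} \<subseteq> inv1 (A * B)"
  proof
    fix X assume "X \<in> {B1 * G * A1 | G A1 B1. A1 \<in> inv1 A \<and> B1 \<in> inv1 B \<and> G \<in> inv1 (A1 * A * B * B1)}"
    then obtain G A1 B1 where X: "X = B1 * G * A1" and A1i: "A1 \<in> inv1 A" and B1i: "B1 \<in> inv1 B" and Gi: "G \<in> inv1 (A1 * A * B * B1)" by blast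
    have A1c: "A1 \<in> carrier_mat n m" and A1h: "A * A1 * (A) = A"
      using A1i A B by (auto simp: inv1_def)
    have B1c: "B1 \<in> carrier_mat p n" and B1h: "B * B1 * (B) = B"
      using B1i A B by (auto simp: inv1_def)
    have Gc: "G \<in> carrier_mat n n" and Gh: "A1 * A * B * B1 * G * (A1 * A * B * B1) = A1 * A * B * B1"
      using Gi A B A1c B1c by (auto simp: inv1_def)

    show "X \<in> inv1 (A * B)" unfolding inv1_def X using c7[OF A B A1c B1c Gc A1h B1h Gh] A1c B1c Gc A B by auto
  qed
  have s8: "{ctrans B * G * ctrans A | G. G \<in> inv1 (ctrans A * A * B * ctrans B)} \<subseteq> inv1 (A * B)"
  proof
    fix X assume "X \<in> {ctrans B * G * ctrans A | G. G \<in> inv1 (ctrans A * A * B * ctrans B)}"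
    then obtain G where X: "X = ctrans B * G * ctrans A" and Gi: "G \<in> inv1 (ctrans A * A * B * ctrans B)" by blast
    have Gc: "G \<in> carrier_mat n n" and Gh: "ctrans A * A * B * ctrans B * G * (ctrans A * A * B * ctrans B) = ctrans A * A * B * ctrans B"
      using Gi A B by (auto simp: inv1_def)

    show "X \<in> inv1 (A * B)" unfolding inv1_def X using c8[OF A B Gc Gh] Gc A B by auto
  qed
  have s9: "{ctrans B * B * G * A * ctrans A | G. G \<in> inv1 (A * ctrans A * A * B * ctrans B * B)} \<subseteq> inv1 (A * B)"
  proof
    fix X assume "X \<in> {ctrans B * B * G * A * ctrans A | G. G \<in> inv1 (A * ctrans A * A * B * ctrans B * B)}"
    then obtain G where X: "X = ctrans B * B * G * A * ctrans A" and Gi: "G \<in> inv1 (A * ctrans A * A * B * ctrans B * B)" by blast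
    have Gc: "G \<in> carrier_mat p m" and Gh: "A * ctrans A * A * B * ctrans B * B * G * (A * ctrans A * A * B * ctrans B * B) = A * ctrans A * A * B * ctrans B * B"
      using Gi A B by (auto simp: inv1_def)

    show "X \<in> inv1 (A * B)" unfolding inv1_def X using c9[OF A B Gc Gh] Gc A B by auto
  qed
  show ?thesis using s1 s2 s3 s4 s5 s6 s7 s8 s9 by blast
qed

end
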